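(* Every sequential Thiele rule and sequential Phragmén satisfy participation for unrepresented voters. The method of equal shares violates participation for unrepresented voters: there exist a profile $A$, a committee size $k$, and a voter $i\in N_A$ such that $W\cap A_i=\emptyset$ for some (indeed every) $W\in f(A,k)$ but $f(A_{-i},k)\succ_i f(A,k)$, where $f$ is the method of equal shares.
   Context: Candidates form a finite set $C$, $|C|=m>1$. An approval profile $A$ has a nonempty finite voter set $N_A$, each $i\in N_A$ having a nonempty ballot $A_i\subseteq C$; $N_A(c)=\{i\in N_A:c\in A_i\}$, $n=|N_A|$, $A_{-i}$ is $A$ with voter $i$ removed. Committees of size $k\in\{1,\dots,m-1\}$ are $k$-subsets of $C$; an ABC voting rule $f$ returns a nonempty set $f(A,k)$ of committees. Preferences: $W\succsim_i W'$ iff $|W\cap A_i|\ge|W'\cap A_i|$, $W\succ_i W'$ iff $>$. Kelly's extension: $X\succsim_i Y$ iff $W\succsim_i W'$ for all $W\in X,W'\in Y$; $X\succ_i Y$ iff $X\succsim_i Y$ and $W\succ_i W'$ for some $W\in X,W'\in Y$. A rule $f$ satisfies participation for unrepresented voters if $f(A_{-i},k)\not\succ_i f(A,k)$ for all profiles $A$ (with $|N_A|\ge2$), sizes $k$, and voters $i\in N_A$ for which some $W\in f(A,k)$ satisfies $W\cap A_i=\emptyset$. All rules below add candidates sequentially and return every committee obtainable under some tie-breaking. Sequential Thiele rule: given $s:\mathbb N_0\to\mathbb Q$ with $s(0)=0$, $s(1)>0$, $s$ nondecreasing and concave, and $\hat s(A,W)=\sum_{i\in N_A}s(|A_i\cap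 W|)$; having chosen $c_1,\dots,c_\ell$, the next candidate is any $x\notin\{c_1,\dots,c_\ell\}$ maximizing $\hat s(A,\{c_1,\dots,c_\ell,x\})$. Sequential Phragmén: voters' budgets start at 0 and grow at unit rate; as soon as the supporters of an unchosen candidate $c$ have total budget 1, such a $c$ is bought and its supporters' budgets reset to 0; repeat until $k$ are bought. Method of equal shares: initial budgets $k/n$, each candidate costs 1. Phase 1: with current budgets $x_r$, let $C_r$ be unchosen candidates whose supporters have total budget $\ge1$; if nonempty, buy any $c\in C_r$ minimizing $\rho(c)$ where $\sum_{i\in N_A(c)}\min(\rho(c),x_r(i))=1$, and each supporter pays $\min(\rho(c),x_r(i))$; stop when $C_r=\emptyset$. Phase 2: run sequential Phragmén starting from the remaining budgets until $k$ candidates are bought. *)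

theory Defs
  imports Complex_Main
begin

text \<open>Approval profile: voter set N, ballots A (only values on N matter), candidate set C.\<close>
definition valid_profile :: "'a set \<Rightarrow> 'v set \<Rightarrow> ('v \<Rightarrow> 'a set) \<Rightarrow> bool" where
  "valid_profile C N A \<longleftrightarrow> finite N \<and> N \<noteq> {} \<and> (\<forall>i\<in>N. A i \<noteq> {} \<and> A i \<subseteq> C)"

definition supporters :: "'v set \<Rightarrow> ('v \<Rightarrow> 'a set) \<Rightarrow> 'a \<Rightarrow> 'v set" where
  "supporters N A c = {i\<in>N. c \<in> A i}"

definition kelly_strict :: "'a set \<Rightarrow> 'a set set \<Rightarrow> 'a set set \<Rightarrow> bool" where
  "kelly_strict Ai X Y \<longleftrightarrow>
     (\<forall>W\<in>X. \<forall>W'\<in>Y. card (W' \<inter> Ai) \<le> card (W \<inter> Ai)) \<and>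
     (\<exists>W\<in>X. \<exists>W'\<in>Y. card (W' \<inter> Ai) < card (W \<inter> Ai))"

type_synonym ('a, 'v) abc_rule = "'a set \<Rightarrow> 'v set \<Rightarrow> ('v \<Rightarrow> 'a set) \<Rightarrow> nat \<Rightarrow> 'a set set"

text \<open>Participation for unrepresented voters (for the candidate set C); A_{-i} has voter set N - {i}.\<close>
definition participation_unrepresented :: "'a set \<Rightarrow> ('a, 'v) abc_rule \<Rightarrow> bool" where
  "participation_unrepresented C f \<longleftrightarrow>
     (\<forall>N A k i. valid_profile C N A \<longrightarrow> 2 \<le> card N \<longrightarrow> 1 \<le> k \<longrightarrow> k < card C \<longrightarrow> i \<in> N \<longrightarrow>
        (\<exists>W\<in>f C N A k. W \<inter> A i = {}) \<longrightarrow>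
        \<not> kelly_strict (A i) (f C (N - {i}) A k) (f C N A k))"

definition thiele_function :: "(nat \<Rightarrow> rat) \<Rightarrow> bool" where
  "thiele_function s \<longleftrightarrow> s 0 = 0 \<and> s 1 > 0 \<and> (\<forall>j. s j \<le> s (Suc j)) \<and>
     (\<forall>j. s (Suc (Suc j)) - s (Suc j) \<le> s (Suc j) - s j)"

definition thiele_score :: "(nat \<Rightarrow> rat) \<Rightarrow> 'v set \<Rightarrow> ('v \<Rightarrow> 'a set) \<Rightarrow> 'a set \<Rightarrow> rat" where
  "thiele_score s N A W = (\<Sum>i\<in>N. s (card (A i \<inter> W)))"

text \<open>Committees are built as lists (most recent candidate first); every tie-breaking is allowed.\<close>
definition seq_thiele_step :: "(nat \<Rightarrow> rat) \<Rightarrow> 'a set \<Rightarrow> 'v set \<Rightarrow> ('v \<Rightarrow> 'a set) \<Rightarrow> 'a list \<Rightarrow> 'a list \<Rightarrow> bool" where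
  "seq_thiele_step s C N A xs ys \<longleftrightarrow>
     (\<exists>x. x \<in> C - set xs \<and>
          (\<forall>y\<in>C - set xs. thiele_score s N A (insert y (set xs)) \<le> thiele_score s N A (insert x (set xs))) \<and>
          ys = x # xs)"

definition seq_thiele :: "(nat \<Rightarrow> rat) \<Rightarrow> ('a, 'v) abc_rule" where
  "seq_thiele s C N A k = {set xs | xs. (seq_thiele_step s C N A)\<^sup>*\<^sup>* [] xs \<and> length xs = k}"

text \<open>Time until the supporters of c (budgets b growing at unit rate) jointly hold budget 1.\<close>
definition phrag_time :: "'v set \<Rightarrow> ('v \<Rightarrow> 'a set) \<Rightarrow> ('v \<Rightarrow> real) \<Rightarrow> 'a \<Rightarrow> real" where
  "phrag_time N A b c = (1 - (\<Sum>i\<in>supporters N A c. b i)) / real (card (supporters N A c))"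

text \<open>One purchase. Candidates without supporters are never affordable; they are added
  (arbitrarily) only once every remaining candidate is unsupported.\<close>
definition phragmen_step :: "'a set \<Rightarrow> 'v set \<Rightarrow> ('v \<Rightarrow> 'a set) \<Rightarrow>
     ('a list \<times> ('v \<Rightarrow> real)) \<Rightarrow> ('a list \<times> ('v \<Rightarrow> real)) \<Rightarrow> bool" where
  "phragmen_step C N A st st' \<longleftrightarrow>
     (\<exists>c. c \<in> C - set (fst st) \<and> fst st' = c # fst st \<and>
        ((supporters N A c \<noteq> {} \<and>
          (\<forall>d\<in>C - set (fst st). supporters N A d \<noteq> {} \<longrightarrow>
              phrag_time N A (snd st) c \<le> phrag_time N A (snd st) d) \<and>
          snd st' = (\<lambda>i. if i \<in> supporters N A c then 0 else snd st i + phrag_time N A (snd st) c))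
        \<or> ((\<forall>d\<in>C - set (fst st). supporters N A d = {}) \<and> snd st' = snd st)))"

definition seq_phragmen :: "('a, 'v) abc_rule" where
  "seq_phragmen C N A k =
     {set xs | xs b. (phragmen_step C N A)\<^sup>*\<^sup>* ([], \<lambda>_. 0) (xs, b) \<and> length xs = k}"

definition mes_affordable :: "'v set \<Rightarrow> ('v \<Rightarrow> 'a set) \<Rightarrow> ('v \<Rightarrow> real) \<Rightarrow> 'a \<Rightarrow> bool" where
  "mes_affordable N A x c \<longleftrightarrow> 1 \<le> (\<Sum>i\<in>supporters N A c. x i)"

definition mes_rho_ok :: "'v set \<Rightarrow> ('v \<Rightarrow> 'a set) \<Rightarrow> ('v \<Rightarrow> real) \<Rightarrow> 'a \<Rightarrow> real \<Rightarrow> bool" where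
  "mes_rho_ok N A x c \<rho> \<longleftrightarrow> (\<Sum>i\<in>supporters N A c. min \<rho> (x i)) = 1"

text \<open>Phase-1 purchase: c affordable, \<rho> a solution for c that is at most every solution
  \<rho>' for every affordable candidate (so \<rho> = \<rho>(c) is minimal).\<close>
definition mes_step1 :: "'a set \<Rightarrow> 'v set \<Rightarrow> ('v \<Rightarrow> 'a set) \<Rightarrow>
     ('a list \<times> ('v \<Rightarrow> real)) \<Rightarrow> ('a list \<times> ('v \<Rightarrow> real)) \<Rightarrow> bool" where
  "mes_step1 C N A st st' \<longleftrightarrow>
     (\<exists>c \<rho>. c \<in> C - set (fst st) \<and> mes_affordable N A (snd st) c \<and> mes_rho_ok N A (snd st) c \<rho> \<and>
        (\<forall>d\<in>C - set (fst st). \<forall>\<rho>'. mes_affordable N A (snd st) d \<longrightarrow> mes_rho_ok N A (snd st) d \<rho>' \<longrightarrow> \<rho> \<le> \<rho>') \<and>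
        fst st' = c # fst st \<and>
        snd st' = (\<lambda>i. if i \<in> supporters N A c then snd st i - min \<rho> (snd st i) else snd st i))"

definition mes_phase1_done :: "'a set \<Rightarrow> 'v set \<Rightarrow> ('v \<Rightarrow> 'a set) \<Rightarrow> ('a list \<times> ('v \<Rightarrow> real)) \<Rightarrow> bool" where
  "mes_phase1_done C N A st \<longleftrightarrow> \<not> (\<exists>c\<in>C - set (fst st). mes_affordable N A (snd st) c)"

definition equal_shares :: "('a, 'v) abc_rule" where
  "equal_shares C N A k =
     {set xs | xs. \<exists>st b. (mes_step1 C N A)\<^sup>*\<^sup>* ([], \<lambda>_. real k / real (card N)) st \<and>
                          mes_phase1_done C N A st \<and>
                          (phragmen_step C N A)\<^sup>*\<^sup>* st (xs, b) \<and> length xs = k}"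

end

theory Submission imports Defs begin

locale genrun =
  fixes R R' :: "'s \<Rightarrow> 's \<Rightarrow> bool" and L :: "'s \<Rightarrow> 'a list" and s0 :: 's and Ai :: "'a set" and k :: nat
  assumes L0: "L s0 = []"
  and H1: "R st st' \<Longrightarrow> \<exists>c. L st' = c # L st"
  and H1': "R' st st' \<Longrightarrow> \<exists>c. L st' = c # L st"
  and H2: "R\<^sup>*\<^sup>* s0 st \<Longrightarrow> set (L st) \<inter> Ai = {} \<Longrightarrow> R st st' \<Longrightarrow> set (L st') \<inter> Ai = {} \<Longrightarrow> R' st st'"
  and H3: "R\<^sup>*\<^sup>* s0 st \<Longrightarrow> set (L st) \<inter> Ai = {} \<Longrightarrow> R' st st' \<Longrightarrow>
            (R st st' \<and> set (L st') \<inter> Ai = {}) \<or> (\<exists>st''. R st st'' \<and> set (L st'') \<inter> Ai \<noteq> {})"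
  and H4: "R\<^sup>*\<^sup>* s0 st \<Longrightarrow> length (L st) < k \<Longrightarrow> \<exists>st'. R st st'"
begin

lemma LA: "R\<^sup>*\<^sup>* s0 st \<Longrightarrow> set (L st) \<inter> Ai = {} \<Longrightarrow> R'\<^sup>*\<^sup>* s0 st"
proof (induction rule: rtranclp_induct)
  case base then show ?case by simp
next
  case (step y z)
  from H1[OF step(2)] obtain c where c: "L z = c # L y" by blast
  with step(4) have dy: "set (L y) \<inter> Ai = {}" by auto
  have "R'\<^sup>*\<^sup>* s0 y" using step(3)[OF dy] .
  moreover have "R' y z" using H2[OF step(1) dy step(2) step(4)] .
  ultimately show ?case by (rule rtranclp.rtrancl_into_rtrancl)
qed

definition bad :: "nat \<Rightarrow> bool" where
  "bad n \<longleftrightarrow> (\<exists>st. R\<^sup>*\<^sup>* s0 st \<and> set (L st) \<inter> Ai \<noteq> {} \<and> length (L st) \<le> n)"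

lemma LB: "R'\<^sup>*\<^sup>* s0 st \<Longrightarrow> bad (length (L st)) \<or> (set (L st) \<inter> Ai = {} \<and> R\<^sup>*\<^sup>* s0 st)"
proof (induction rule: rtranclp_induct)
  case base then show ?case using L0 by simp
next
  case (step y z)
  from H1'[OF step(2)] obtain c where c: "L z = c # L y" by blast
  from step(3) show ?case
  proof
    assume "bad (length (L y))"
    then show ?case using c unfolding bad_def by (auto intro: le_SucI)
  next
    assume a: "set (L y) \<inter> Ai = {} \<and> R\<^sup>*\<^sup>* s0 y"
    from H3[OF conjunct2[OF a] conjunct1[OF a] step(2)] show ?case
    proof
      assume "R y z \<and> set (L z) \<inter> Ai = {}"
      then show ?case using a by (meson rtranclp.rtrancl_into_rtrancl)
    next
      assume "\<exists>st''. R y st'' \<and> set (L st'') \<inter> Ai \<noteq> {}"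
      then obtain st'' where "R y st''" "set (L st'') \<inter> Ai \<noteq> {}" by blast
      moreover from H1[OF this(1)] obtain d where "L st'' = d # L y" by blast
      ultimately show ?case using a c unfolding bad_def
        by (intro disjI1 exI[of _ st'']) auto
    qed
  qed
qed

lemma LC: "R\<^sup>*\<^sup>* s0 st \<Longrightarrow> length (L st) \<le> k \<Longrightarrow>
   \<exists>st'. R\<^sup>*\<^sup>* s0 st' \<and> length (L st') = k \<and> set (L st) \<subseteq> set (L st')"
proof (induction "k - length (L st)" arbitrary: st)
  case 0 then show ?case by auto
next
  case (Suc x)
  then have "length (L st) < k" by auto
  from H4[OF Suc(3) this] obtain st1 where st1: "R st st1" by blast
  from H1[OF st1] obtain c where c: "L st1 = c # L st" by blast
  have "R\<^sup>*\<^sup>* s0 st1" using Suc(3) st1 by auto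
  moreover have "x = k - length (L st1)" using Suc(2) c by auto
  moreover have "length (L st1) \<le> k" using c \<open>length (L st) < k\<close> by auto
  ultimately obtain st' where "R\<^sup>*\<^sup>* s0 st'" "length (L st') = k" "set (L st1) \<subseteq> set (L st')"
    using Suc(1) by blast
  then show ?case using c by auto
qed

definition FR where "FR = {set (L st) | st. R\<^sup>*\<^sup>* s0 st \<and> length (L st) = k}"
definition FR' where "FR' = {set (L st) | st. R'\<^sup>*\<^sup>* s0 st \<and> length (L st) = k}"

lemma main:
  assumes W: "W \<in> FR" "W \<inter> Ai = {}" and fin: "finite Ai"
  shows "\<not> kelly_strict Ai FR' FR"
proof
  assume ks: "kelly_strict Ai FR' FR"
  then obtain W1 W2 where W1: "W1 \<in> FR'" "W2 \<in> FR" "card (W2 \<inter> Ai) < card (W1 \<inter> Ai)"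
    unfolding kelly_strict_def by blast
  then have ne: "W1 \<inter> Ai \<noteq> {}" by (metis card.empty less_zeroE)
  from W1(1) obtain st where st: "R'\<^sup>*\<^sup>* s0 st" "length (L st) = k" "W1 = set (L st)"
    unfolding FR'_def by blast
  from LB[OF st(1)] have "bad k" using st ne by auto
  then obtain s1 where s1: "R\<^sup>*\<^sup>* s0 s1" "set (L s1) \<inter> Ai \<noteq> {}" "length (L s1) \<le> k"
    unfolding bad_def by blast
  from LC[OF s1(1) s1(3)] obtain s2 where s2: "R\<^sup>*\<^sup>* s0 s2" "length (L s2) = k" "set (L s1) \<subseteq> set (L s2)"
    by blast
  have W2': "set (L s2) \<in> FR" using s2 unfolding FR_def by blast
  have "set (L s2) \<inter> Ai \<noteq> {}" using s1(2) s2(3) by blast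
  then have pos: "0 < card (set (L s2) \<inter> Ai)" using fin by (simp add: card_gt_0_iff)
  from W(1) obtain sw where sw: "R\<^sup>*\<^sup>* s0 sw" "length (L sw) = k" "W = set (L sw)"
    unfolding FR_def by blast
  have "W \<in> FR'" using LA[OF sw(1)] sw W(2) unfolding FR'_def by blast
  with ks W2' have "card (set (L s2) \<inter> Ai) \<le> card (W \<inter> Ai)" unfolding kelly_strict_def by blast
  with W(2) pos show False by simp
qed

end

lemma ex_min_fin:
  fixes f :: "'b \<Rightarrow> 'c::linorder"
  assumes "finite S" "S \<noteq> {}" shows "\<exists>x\<in>S. \<forall>y\<in>S. f x \<le> f y"
proof -
  have "Min (f ` S) \<in> f ` S" using assms by simp
  then obtain x where "x \<in> S" "f x = Min (f ` S)" by auto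
  then show ?thesis using assms by (metis Min_le finite_imageI imageI)
qed

lemma ex_max_fin:
  fixes f :: "'b \<Rightarrow> 'c::linorder"
  assumes "finite S" "S \<noteq> {}" shows "\<exists>x\<in>S. \<forall>y\<in>S. f y \<le> f x"
proof -
  have "Max (f ` S) \<in> f ` S" using assms by simp
  then obtain x where "x \<in> S" "f x = Max (f ` S)" by auto
  then show ?thesis using assms by (metis Max_ge finite_imageI imageI)
qed

lemma score_split:
  assumes "finite N" "i \<in> N" "S \<inter> A i = {}" "s 0 = 0"
  shows "thiele_score s N A (insert y S) = thiele_score s (N - {i}) A (insert y S) + (if y \<in> A i then s 1 else 0)"
proof -
  have "thiele_score s N A (insert y S) = s (card (A i \<inter> insert y S)) + thiele_score s (N - {i}) A (insert y S)"
    unfolding thiele_score_def using assms by (simp add: sum.remove)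
  moreover have "A i \<inter> insert y S = (if y \<in> A i then {y} else {})" using assms(3) by auto
  ultimately show ?thesis using assms(4) by simp
qed

lemma thiele_part:
  assumes s: "thiele_function s" and C: "finite C" "1 < card C"
  shows "participation_unrepresented C (seq_thiele s)"
  unfolding participation_unrepresented_def
proof (intro allI impI)
  fix N :: "'v set" and A k i
  assume vp: "valid_profile C N A" and "2 \<le> card N" and "1 \<le> k" and kC: "k < card C" and iN: "i \<in> N"
    and ex: "\<exists>W\<in>seq_thiele s C N A k. W \<inter> A i = {}"
  have finN: "finite N" using vp unfolding valid_profile_def by auto
  have s0: "s 0 = 0" and s1: "s 1 > 0" using s unfolding thiele_function_def by auto
  let ?R = "seq_thiele_step s C N A" and ?R' = "seq_thiele_step s C (N - {i}) A"
  let ?TS = "thiele_score s N A" and ?TS' = "thiele_score s (N - {i}) A"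
  have split: "\<And>xs y. set xs \<inter> A i = {} \<Longrightarrow> ?TS (insert y (set xs)) = ?TS' (insert y (set xs)) + (if y \<in> A i then s 1 else 0)"
    using score_split[of N i _ A s, OF finN iN _ s0] by blast
  have maxex: "\<And>xs. length xs < k \<Longrightarrow> \<exists>z\<in>C - set xs. \<forall>y\<in>C - set xs. ?TS (insert y (set xs)) \<le> ?TS (insert z (set xs))"
  proof -
    fix xs :: "'a list" assume "length xs < k"
    then have "card (set xs) < card C" using kC card_length[of xs] by linarith
    then have "\<not> C \<subseteq> set xs" using card_mono[OF List.finite_set, of C xs] by linarith
    then have "C - set xs \<noteq> {}" by blast
    then show "?thesis xs" using ex_max_fin[of "C - set xs" "\<lambda>y. ?TS (insert y (set xs))"] C(1) by simp
  qed
  interpret g: genrun ?R ?R' id "[]" "A i" k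
  proof
    show "id [] = []" by simp
  next
    fix st st' assume "?R st st'" then show "\<exists>c. id st' = c # id st" unfolding seq_thiele_step_def by auto
  next
    fix st st' assume "?R' st st'" then show "\<exists>c. id st' = c # id st" unfolding seq_thiele_step_def by auto
  next
    fix st st' assume d: "set (id st) \<inter> A i = {}" and r: "?R st st'" and d': "set (id st') \<inter> A i = {}"
    from r obtain x where x: "x \<in> C - set st" "\<forall>y\<in>C - set st. ?TS (insert y (set st)) \<le> ?TS (insert x (set st))" "st' = x # st"
      unfolding seq_thiele_step_def by blast
    have xn: "x \<notin> A i" using d' x(3) by auto
    show "?R' st st'" unfolding seq_thiele_step_def
    proof (intro exI conjI ballI)
      show "x \<in> C - set st" by fact
      show "st' = x # st" by fact
      fix y assume y: "y \<in> C - set st"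
      have "?TS' (insert y (set st)) \<le> ?TS (insert y (set st))" using split[of st y] d s1 by auto
      also have "\<dots> \<le> ?TS (insert x (set st))" using x(2) y by blast
      also have "\<dots> = ?TS' (insert x (set st))" using split[of st x] d xn by auto
      finally show "?TS' (insert y (set st)) \<le> ?TS' (insert x (set st))" .
    qed
  next
    fix st st' assume reach: "?R\<^sup>*\<^sup>* [] st" and d: "set (id st) \<inter> A i = {}" and r: "?R' st st'"
    from r obtain x where x: "x \<in> C - set st" "\<forall>y\<in>C - set st. ?TS' (insert y (set st)) \<le> ?TS' (insert x (set st))" "st' = x # st"
      unfolding seq_thiele_step_def by blast
    have "C - set st \<noteq> {}" using x by blast
    then obtain z where z: "z \<in> C - set st" "\<forall>y\<in>C - set st. ?TS (insert y (set st)) \<le> ?TS (insert z (set st))"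
      using ex_max_fin[of "C - set st" "\<lambda>y. ?TS (insert y (set st))"] C(1) by auto
    have Rz: "?R st (z # st)" unfolding seq_thiele_step_def using z by blast
    show "(?R st st' \<and> set (id st') \<inter> A i = {}) \<or> (\<exists>st''. ?R st st'' \<and> set (id st'') \<inter> A i \<noteq> {})"
    proof (cases "z \<in> A i")
      case True then show ?thesis using Rz by (intro disjI2 exI[of _ "z # st"]) auto
    next
      case False
      have e1: "?TS (insert z (set st)) = ?TS' (insert z (set st))" using split[of st z] d False by auto
      have e2: "?TS (insert x (set st)) \<le> ?TS (insert z (set st))" using z x by blast
      have e3: "?TS' (insert z (set st)) \<le> ?TS' (insert x (set st))" using z x by blast
      have e4: "?TS' (insert x (set st)) \<le> ?TS (insert x (set st))" using split[of st x] d s1 by auto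
      have xn: "x \<notin> A i"
      proof
        assume "x \<in> A i"
        then have "?TS (insert x (set st)) = ?TS' (insert x (set st)) + s 1" using split[of st x] d by auto
        then show False using e1 e2 e3 s1 by linarith
      qed
      have "?R st st'" unfolding seq_thiele_step_def
      proof (intro exI conjI ballI)
        show "x \<in> C - set st" "st' = x # st" using x by auto
        fix y assume "y \<in> C - set st"
        then have "?TS (insert y (set st)) \<le> ?TS (insert z (set st))" using z by blast
        then show "?TS (insert y (set st)) \<le> ?TS (insert x (set st))" using e1 e2 e3 e4 by linarith
      qed
      then show ?thesis using xn x(3) d by auto
    qed
  next
    fix st assume "?R\<^sup>*\<^sup>* [] st" and l: "length (id st) < k"
    from maxex[of st] l obtain z where "z \<in> C - set st" "\<forall>y\<in>C - set st. ?TS (insert y (set st)) \<le> ?TS (insert z (set st))"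
      by auto
    then show "\<exists>st'. ?R st st'" unfolding seq_thiele_step_def by blast
  qed
  have eq1: "g.FR = seq_thiele s C N A k" unfolding g.FR_def seq_thiele_def by simp
  have eq2: "g.FR' = seq_thiele s C (N - {i}) A k" unfolding g.FR'_def seq_thiele_def by simp
  have finA: "finite (A i)" using vp iN C(1) unfolding valid_profile_def by (meson finite_subset)
  from ex obtain W where "W \<in> g.FR" "W \<inter> A i = {}" using eq1 by auto
  from g.main[OF this finA] show "\<not> kelly_strict (A i) (seq_thiele s C (N - {i}) A k) (seq_thiele s C N A k)"
    using eq1 eq2 by simp
qed


lemma supp_sub: "supporters (N - {i}) A d \<subseteq> supporters N A d"
  unfolding supporters_def by auto

lemma supp_notin: "d \<notin> A i \<Longrightarrow> supporters (N - {i}) A d = supporters N A d"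
  unfolding supporters_def by auto

lemma supp_in: "d \<in> A i \<Longrightarrow> i \<in> N \<Longrightarrow> supporters N A d = insert i (supporters (N - {i}) A d) \<and> i \<notin> supporters (N - {i}) A d"
  unfolding supporters_def by auto

lemma supp_fin: "finite N \<Longrightarrow> finite (supporters N A d)"
  unfolding supporters_def by auto

lemma time_le:
  assumes finN: "finite N" and iN: "i \<in> N" and dA: "d \<in> A i" and b0: "\<forall>j. 0 \<le> b j"
    and sum1: "(\<Sum>j\<in>supporters N A d. b j) \<le> 1" and ne: "supporters (N - {i}) A d \<noteq> {}"
  shows "phrag_time N A b d \<le> phrag_time (N - {i}) A b d"
proof -
  let ?S = "supporters (N - {i}) A d"
  have fS: "finite ?S" using supp_fin[OF finN] supp_sub by (metis finite_subset)
  from supp_in[of d A i N, OF dA iN] have e: "supporters N A d = insert i ?S" "i \<notin> ?S" by auto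
  define n where "n = real (card ?S)"
  define \<sigma> where "\<sigma> = (\<Sum>j\<in>?S. b j)"
  have n0: "n > 0" using ne fS unfolding n_def by (simp add: card_gt_0_iff)
  have cN: "real (card (supporters N A d)) = n + 1" using e fS unfolding n_def by simp
  have sN: "(\<Sum>j\<in>supporters N A d. b j) = b i + \<sigma>" using e fS unfolding \<sigma>_def by simp
  have h: "\<sigma> + b i \<le> 1" "b i \<ge> 0" using sum1 sN b0 by auto
  have "(1 - (b i + \<sigma>)) / (n + 1) \<le> (1 - \<sigma>) / n"
  proof -
    have e: "(1 - \<sigma>) * (n + 1) - (1 - (b i + \<sigma>)) * n = (1 - \<sigma>) + b i * n" by (simp add: algebra_simps)
    have "0 \<le> b i * n" using h n0 by simp
    then have le: "(1 - (b i + \<sigma>)) * n \<le> (1 - \<sigma>) * (n + 1)" using e h by linarith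
    have p1: "0 < n + 1" using n0 by simp
    show ?thesis using le n0 p1 by (simp add: divide_le_eq le_divide_eq)
  qed
  then show ?thesis unfolding phrag_time_def using cN sN unfolding n_def \<sigma>_def by simp
qed

definition phinv :: "'a set \<Rightarrow> 'v set \<Rightarrow> ('v \<Rightarrow> 'a set) \<Rightarrow> ('a list \<times> ('v \<Rightarrow> real)) \<Rightarrow> bool" where
  "phinv C N A st \<longleftrightarrow> (\<forall>j. 0 \<le> snd st j) \<and> (\<forall>d\<in>C - set (fst st). (\<Sum>j\<in>supporters N A d. snd st j) \<le> 1)"

lemma time_nonneg:
  assumes "finite N" "phinv C N A st" "d \<in> C - set (fst st)" "supporters N A d \<noteq> {}"
  shows "0 \<le> phrag_time N A (snd st) d"
  using assms supp_fin[OF assms(1)] unfolding phinv_def phrag_time_def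
  by (simp add: card_gt_0_iff)

lemma time_mul:
  assumes "finite N" "supporters N A d \<noteq> {}"
  shows "real (card (supporters N A d)) * phrag_time N A b d = 1 - (\<Sum>j\<in>supporters N A d. b j)"
proof -
  have "card (supporters N A d) > 0" using assms supp_fin[OF assms(1)] by (simp add: card_gt_0_iff)
  then show ?thesis unfolding phrag_time_def by simp
qed

lemma phinv_step:
  assumes finN: "finite N" and inv: "phinv C N A st" and r: "phragmen_step C N A st st'"
  shows "phinv C N A st'"
proof -
  obtain xs b where st: "st = (xs, b)" by (cases st)
  from r obtain c where c: "c \<in> C - set xs" "fst st' = c # xs"
    and br: "(supporters N A c \<noteq> {} \<and>
          (\<forall>d\<in>C - set xs. supporters N A d \<noteq> {} \<longrightarrow> phrag_time N A b c \<le> phrag_time N A b d) \<and>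
          snd st' = (\<lambda>i. if i \<in> supporters N A c then 0 else b i + phrag_time N A b c))
        \<or> ((\<forall>d\<in>C - set xs. supporters N A d = {}) \<and> snd st' = b)"
    unfolding phragmen_step_def st fst_conv snd_conv by blast
  from br show ?thesis
  proof
    assume h: "supporters N A c \<noteq> {} \<and>
          (\<forall>d\<in>C - set xs. supporters N A d \<noteq> {} \<longrightarrow> phrag_time N A b c \<le> phrag_time N A b d) \<and>
          snd st' = (\<lambda>i. if i \<in> supporters N A c then 0 else b i + phrag_time N A b c)"
    define t where "t = phrag_time N A b c"
    have t0: "0 \<le> t" using time_nonneg[OF finN inv, of c] c h st unfolding t_def by simp
    have b0: "\<forall>j. 0 \<le> b j" using inv st unfolding phinv_def by simp
    have le: "\<forall>j. snd st' j \<le> b j + t" using h t0 b0 unfolding t_def by simp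
    show ?thesis unfolding phinv_def
    proof (intro conjI allI ballI)
      fix j show "0 \<le> snd st' j" using h t0 b0 unfolding t_def by simp
    next
      fix d assume d: "d \<in> C - set (fst st')"
      then have d': "d \<in> C - set xs" using c by auto
      show "(\<Sum>j\<in>supporters N A d. snd st' j) \<le> 1"
      proof (cases "supporters N A d = {}")
        case True then show ?thesis by simp
      next
        case False
        have "(\<Sum>j\<in>supporters N A d. snd st' j) \<le> (\<Sum>j\<in>supporters N A d. b j + t)"
          by (rule sum_mono) (use le in auto)
        also have "\<dots> = (\<Sum>j\<in>supporters N A d. b j) + real (card (supporters N A d)) * t" by (simp add: sum.distrib)
        also have "\<dots> \<le> (\<Sum>j\<in>supporters N A d. b j) + real (card (supporters N A d)) * phrag_time N A b d"
          using h d' False unfolding t_def by (intro add_left_mono mult_left_mono) auto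
        also have "\<dots> = 1" using time_mul[OF finN False] by simp
        finally show ?thesis .
      qed
    qed
  next
    assume h: "(\<forall>d\<in>C - set xs. supporters N A d = {}) \<and> snd st' = b"
    show ?thesis using inv h c st unfolding phinv_def by auto
  qed
qed

lemma phinv_reach:
  assumes "finite N" shows "(phragmen_step C N A)\<^sup>*\<^sup>* ([], \<lambda>_. 0) st \<Longrightarrow> phinv C N A st"
proof (induction rule: rtranclp_induct)
  case base then show ?case unfolding phinv_def by simp
next
  case (step y z) then show ?case using phinv_step[OF assms] by blast
qed


lemma phragmen_stepE:
  assumes "phragmen_step C N A (xs, b) st'"
  obtains c where "c \<in> C - set xs" "fst st' = c # xs"
    "(supporters N A c \<noteq> {} \<and>
          (\<forall>d\<in>C - set xs. supporters N A d \<noteq> {} \<longrightarrow> phrag_time N A b c \<le> phrag_time N A b d) \<and>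
          snd st' = (\<lambda>j. if j \<in> supporters N A c then 0 else b j + phrag_time N A b c))
        \<or> ((\<forall>d\<in>C - set xs. supporters N A d = {}) \<and> snd st' = b)"
  using assms unfolding phragmen_step_def fst_conv snd_conv by blast


lemma phragmen_part:
  assumes C: "finite C" "1 < card C"
  shows "participation_unrepresented C seq_phragmen"
  unfolding participation_unrepresented_def
proof (intro allI impI)
  fix N :: "'v set" and A k i
  assume vp: "valid_profile C N A" and "2 \<le> card N" and "1 \<le> k" and kC: "k < card C" and iN: "i \<in> N"
    and ex: "\<exists>W\<in>seq_phragmen C N A k. W \<inter> A i = {}"
  have finN: "finite N" using vp unfolding valid_profile_def by auto
  let ?R = "phragmen_step C N A" and ?R' = "phragmen_step C (N - {i}) A"
  let ?sp = "supporters N A" and ?sp' = "supporters (N - {i}) A"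
  let ?s0 = "([], \<lambda>_. 0) :: 'a list \<times> ('v \<Rightarrow> real)"
  define nb where "nb = (\<lambda>(b::'v\<Rightarrow>real) c. (\<lambda>j. if j \<in> ?sp c then 0 else b j + phrag_time N A b c))"
  have stepA: "\<And>xs b z. z \<in> C - set xs \<Longrightarrow> ?sp z \<noteq> {} \<Longrightarrow>
      (\<forall>d\<in>C - set xs. ?sp d \<noteq> {} \<longrightarrow> phrag_time N A b z \<le> phrag_time N A b d) \<Longrightarrow> ?R (xs, b) (z # xs, nb b z)"
    unfolding phragmen_step_def nb_def by auto
  have minex: "\<And>xs b. \<exists>d\<in>C - set xs. ?sp d \<noteq> {} \<Longrightarrow>
      \<exists>z\<in>C - set xs. ?sp z \<noteq> {} \<and> (\<forall>d\<in>C - set xs. ?sp d \<noteq> {} \<longrightarrow> phrag_time N A b z \<le> phrag_time N A b d)"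
  proof -
    fix xs b assume "\<exists>d\<in>C - set xs. ?sp d \<noteq> {}"
    then have "{d\<in>C - set xs. ?sp d \<noteq> {}} \<noteq> {}" by auto
    from ex_min_fin[OF _ this, of "phrag_time N A b"] C(1)
    show "\<exists>z\<in>C - set xs. ?sp z \<noteq> {} \<and> (\<forall>d\<in>C - set xs. ?sp d \<noteq> {} \<longrightarrow> phrag_time N A b z \<le> phrag_time N A b d)"
      by auto
  qed
  interpret g: genrun ?R ?R' fst ?s0 "A i" k
  proof
    show "fst ?s0 = []" by simp
  next
    fix st st' assume "?R st st'" then show "\<exists>c. fst st' = c # fst st" unfolding phragmen_step_def by auto
  next
    fix st st' assume "?R' st st'" then show "\<exists>c. fst st' = c # fst st" unfolding phragmen_step_def by auto
  next
    fix st st' assume reach: "?R\<^sup>*\<^sup>* ?s0 st" and d: "set (fst st) \<inter> A i = {}" and r: "?R st st'"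
      and d': "set (fst st') \<inter> A i = {}"
    obtain xs b where st: "st = (xs, b)" by (cases st)
    have inv: "phinv C N A st" using phinv_reach[OF finN] reach by blast
    obtain c where c: "c \<in> C - set xs" "fst st' = c # xs"
      and br: "(?sp c \<noteq> {} \<and>
          (\<forall>d\<in>C - set xs. ?sp d \<noteq> {} \<longrightarrow> phrag_time N A b c \<le> phrag_time N A b d) \<and>
          snd st' = (\<lambda>j. if j \<in> ?sp c then 0 else b j + phrag_time N A b c))
        \<or> ((\<forall>d\<in>C - set xs. ?sp d = {}) \<and> snd st' = b)"
      by (rule phragmen_stepE[OF r[unfolded st]])
    have cn: "c \<notin> A i" using d' c by auto
    have eqc: "?sp' c = ?sp c" using supp_notin[of c A i N, OF cn] .
    have ptc: "phrag_time (N - {i}) A b c = phrag_time N A b c" unfolding phrag_time_def eqc ..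
    from br show "?R' st st'"
    proof
      assume h: "?sp c \<noteq> {} \<and>
          (\<forall>d\<in>C - set xs. ?sp d \<noteq> {} \<longrightarrow> phrag_time N A b c \<le> phrag_time N A b d) \<and>
          snd st' = (\<lambda>j. if j \<in> ?sp c then 0 else b j + phrag_time N A b c)"
      have "\<forall>d\<in>C - set xs. ?sp' d \<noteq> {} \<longrightarrow> phrag_time (N - {i}) A b c \<le> phrag_time (N - {i}) A b d"
      proof (intro ballI impI)
        fix d assume dd: "d \<in> C - set xs" and ne: "?sp' d \<noteq> {}"
        have ne2: "?sp d \<noteq> {}" using ne supp_sub[of N i A d] by blast
        have "phrag_time (N - {i}) A b c \<le> phrag_time N A b d" using h dd ne2 ptc by auto
        also have "\<dots> \<le> phrag_time (N - {i}) A b d"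
        proof (cases "d \<in> A i")
          case True
          show ?thesis by (rule time_le[of N i d A b, OF finN iN True]) (use inv st dd ne in \<open>auto simp: phinv_def\<close>)
        next
          case False then show ?thesis unfolding phrag_time_def supp_notin[of d A i N, OF False] by simp
        qed
        finally show "phrag_time (N - {i}) A b c \<le> phrag_time (N - {i}) A b d" .
      qed
      then show ?thesis unfolding phragmen_step_def st fst_conv snd_conv using c h eqc ptc
        by (intro exI[of _ c]) auto
    next
      assume h: "(\<forall>d\<in>C - set xs. ?sp d = {}) \<and> snd st' = b"
      have "\<forall>d\<in>C - set xs. ?sp' d = {}" using h supp_sub[of N i A] by blast
      then show ?thesis unfolding phragmen_step_def st fst_conv snd_conv using c h
        by (intro exI[of _ c]) auto
    qed
  next
    fix st st' assume reach: "?R\<^sup>*\<^sup>* ?s0 st" and d: "set (fst st) \<inter> A i = {}" and r: "?R' st st'"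
    obtain xs b where st: "st = (xs, b)" by (cases st)
    have inv: "phinv C N A st" using phinv_reach[OF finN] reach by blast
    obtain c where c: "c \<in> C - set xs" "fst st' = c # xs"
      and br: "(?sp' c \<noteq> {} \<and>
          (\<forall>d\<in>C - set xs. ?sp' d \<noteq> {} \<longrightarrow> phrag_time (N - {i}) A b c \<le> phrag_time (N - {i}) A b d) \<and>
          snd st' = (\<lambda>j. if j \<in> ?sp' c then 0 else b j + phrag_time (N - {i}) A b c))
        \<or> ((\<forall>d\<in>C - set xs. ?sp' d = {}) \<and> snd st' = b)"
      by (rule phragmen_stepE[OF r[unfolded st]])
    show "(?R st st' \<and> set (fst st') \<inter> A i = {}) \<or> (\<exists>st''. ?R st st'' \<and> set (fst st'') \<inter> A i \<noteq> {})"
    proof (cases "\<exists>d\<in>C - set xs. ?sp d \<noteq> {}")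
      case False
      then have e: "\<forall>d\<in>C - set xs. ?sp' d = {}" using supp_sub[of N i A] by blast
      have cn: "c \<notin> A i" using False c iN unfolding supporters_def by auto
      have sb: "snd st' = b" using br e c by auto
      have "?R st st'" unfolding phragmen_step_def st fst_conv snd_conv using c False sb
        by (intro exI[of _ c]) auto
      then show ?thesis using cn c d st by auto
    next
      case True
      from minex[OF True, of b] obtain z where z: "z \<in> C - set xs" "?sp z \<noteq> {}"
        "\<forall>d\<in>C - set xs. ?sp d \<noteq> {} \<longrightarrow> phrag_time N A b z \<le> phrag_time N A b d" by blast
      have Rz: "?R st (z # xs, nb b z)" using stepA[OF z] st by simp
      show ?thesis
      proof (cases "z \<in> A i")
        case True then show ?thesis using Rz by (intro disjI2 exI[of _ "(z # xs, nb b z)"]) auto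
      next
        case zn: False
        have eqz: "?sp' z = ?sp z" using supp_notin[of z A i N, OF zn] .
        have ptz: "phrag_time (N - {i}) A b z = phrag_time N A b z" unfolding phrag_time_def eqz ..
        have h: "?sp' c \<noteq> {} \<and>
          (\<forall>d\<in>C - set xs. ?sp' d \<noteq> {} \<longrightarrow> phrag_time (N - {i}) A b c \<le> phrag_time (N - {i}) A b d) \<and>
          snd st' = (\<lambda>j. if j \<in> ?sp' c then 0 else b j + phrag_time (N - {i}) A b c)"
        proof -
          have "\<not> (\<forall>d\<in>C - set xs. ?sp' d = {})" using z(1,2) eqz by blast
          then show ?thesis using br by blast
        qed
        note h1 = conjunct1[OF h] and h2 = conjunct1[OF conjunct2[OF h]] and h3 = conjunct2[OF conjunct2[OF h]]
        have spc: "?sp c \<noteq> {}" using h1 supp_sub[of N i A c] by blast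
        have a1: "phrag_time (N - {i}) A b c \<le> phrag_time N A b z"
          using h2[rule_format, OF z(1)] z(2) eqz ptz by simp
        have a2: "phrag_time N A b z \<le> phrag_time N A b c" using z(3)[rule_format, OF c(1) spc] .
        have a3: "phrag_time N A b c \<le> phrag_time (N - {i}) A b c"
        proof (cases "c \<in> A i")
          case True
          show ?thesis by (rule time_le[of N i c A b, OF finN iN True]) (use inv st c h1 in \<open>auto simp: phinv_def\<close>)
        next
          case False then show ?thesis unfolding phrag_time_def supp_notin[of c A i N, OF False] by simp
        qed
        have cmin: "\<forall>d\<in>C - set xs. ?sp d \<noteq> {} \<longrightarrow> phrag_time N A b c \<le> phrag_time N A b d"
        proof (intro ballI impI)
          fix d assume dd: "d \<in> C - set xs" "?sp d \<noteq> {}"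
          have "phrag_time N A b z \<le> phrag_time N A b d" using z(3) dd by blast
          then show "phrag_time N A b c \<le> phrag_time N A b d" using a1 a3 by linarith
        qed
        have Rc: "?R st (c # xs, nb b c)" using stepA[OF c(1) spc cmin] st by simp
        show ?thesis
        proof (cases "c \<in> A i")
          case True then show ?thesis using Rc by (intro disjI2 exI[of _ "(c # xs, nb b c)"]) auto
        next
          case False
          have eqc: "?sp' c = ?sp c" using supp_notin[of c A i N, OF False] .
          have ptc: "phrag_time (N - {i}) A b c = phrag_time N A b c" unfolding phrag_time_def eqc ..
          have "snd st' = nb b c" unfolding h3 nb_def eqc ptc by simp
          then have "st' = (c # xs, nb b c)" using c(2) by (metis prod.collapse)
          then show ?thesis using Rc False d st by auto
        qed
      qed
    qed
  next
    fix st assume "?R\<^sup>*\<^sup>* ?s0 st" and l: "length (fst st) < k"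
    obtain xs b where st: "st = (xs, b)" by (cases st)
    have "card (set xs) < card C" using l kC card_length[of xs] st by auto
    then have "\<not> C \<subseteq> set xs" using card_mono[OF List.finite_set, of C xs] by linarith
    then obtain c where c: "c \<in> C - set xs" by blast
    show "\<exists>st'. ?R st st'"
    proof (cases "\<exists>d\<in>C - set xs. ?sp d \<noteq> {}")
      case True
      from minex[OF True, of b] obtain z where z: "z \<in> C - set xs" "?sp z \<noteq> {}"
        "\<forall>d\<in>C - set xs. ?sp d \<noteq> {} \<longrightarrow> phrag_time N A b z \<le> phrag_time N A b d" by blast
      show ?thesis using stepA[OF z] st by blast
    next
      case False
      have "?R st (c # xs, b)" unfolding phragmen_step_def st using c False by auto
      then show ?thesis by blast
    qed
  qed
  have eq1: "g.FR = seq_phragmen C N A k" unfolding g.FR_def seq_phragmen_def by force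
  have eq2: "g.FR' = seq_phragmen C (N - {i}) A k" unfolding g.FR'_def seq_phragmen_def by force
  have finA: "finite (A i)" using vp iN C(1) unfolding valid_profile_def by (meson finite_subset)
  from ex obtain W where "W \<in> g.FR" "W \<inter> A i = {}" using eq1 by auto
  from g.main[OF this finA] have "\<not> kelly_strict (A i) g.FR' g.FR" .
  then show "\<not> kelly_strict (A i) (seq_phragmen C (N - {i}) A k) (seq_phragmen C N A k)"
    unfolding eq1 eq2 .
qed


definition exA :: "nat \<Rightarrow> nat set" where
  "exA v = (if v = 0 then {0,3} else if v \<le> 3 then {0,1} else if v \<le> 6 then {0,1,2} else if v \<le> 8 then {2,3} else {3})"

definition exN :: "nat set" where "exN = {0,1,2,3,4,5,6,7,8,9}"
definition exC :: "nat set" where "exC = {0,1,2,3}"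

lemma sA0: "supporters exN exA 0 = {0,1,2,3,4,5,6}" unfolding supporters_def exN_def exA_def by auto
lemma sA1: "supporters exN exA 1 = {1,2,3,4,5,6}" unfolding supporters_def exN_def exA_def by auto
lemma sA2: "supporters exN exA 2 = {4,5,6,7,8}" unfolding supporters_def exN_def exA_def by auto
lemma sA3: "supporters exN exA 3 = {0,7,8,9}" unfolding supporters_def exN_def exA_def by auto
lemma sB0: "supporters (exN - {9}) exA 0 = {0,1,2,3,4,5,6}" unfolding supporters_def exN_def exA_def by auto
lemma sB1: "supporters (exN - {9}) exA 1 = {1,2,3,4,5,6}" unfolding supporters_def exN_def exA_def by auto
lemma sB2: "supporters (exN - {9}) exA 2 = {4,5,6,7,8}" unfolding supporters_def exN_def exA_def by auto
lemma sB3: "supporters (exN - {9}) exA 3 = {0,7,8}" unfolding supporters_def exN_def exA_def by auto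

lemma sA1s: "supporters exN exA (Suc 0) = {1,2,3,4,5,6}" using sA1 by simp
lemma sB1s: "supporters (exN - {9}) exA (Suc 0) = {1,2,3,4,5,6}" using sB1 by simp
lemmas sAll = sA0 sA1 sA2 sA3 sA1s
lemmas sBll = sB0 sB1 sB2 sB3 sB1s

lemma cardN: "card exN = 10" unfolding exN_def by simp
lemma cardN': "card (exN - {9}) = 9" unfolding exN_def by simp

lemma sum_min_le: "finite S \<Longrightarrow> (\<Sum>i\<in>S. min \<rho> (x i)) \<le> real (card S) * \<rho>"
proof -
  assume "finite S"
  have "(\<Sum>i\<in>S. min \<rho> (x i)) \<le> (\<Sum>i\<in>S. \<rho>)" by (rule sum_mono) simp
  then show ?thesis by simp
qed

lemma rho_lb:
  assumes "mes_rho_ok N A x d r" "finite (supporters N A d)" "card (supporters N A d) \<le> m" "m > 0"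
  shows "1 / real m \<le> r"
proof -
  have "1 \<le> real (card (supporters N A d)) * r" using sum_min_le[OF assms(2), of r x] assms(1)
    unfolding mes_rho_ok_def by simp
  then have "r > 0" by (smt (verit) mult_nonneg_nonpos of_nat_0_le_iff)
  then have "real (card (supporters N A d)) * r \<le> real m * r" using assms(3) by (simp add: mult_right_mono)
  with \<open>1 \<le> _\<close> have "1 \<le> real m * r" by simp
  then show ?thesis using assms(4) by (simp add: divide_simps mult.commute)
qed

definition b0 :: "nat \<Rightarrow> real" where "b0 = (\<lambda>_. 3/10)"
definition b1 :: "nat \<Rightarrow> real" where "b1 = (\<lambda>v. if v \<le> 6 then 11/70 else 3/10)"
definition b2 :: "nat \<Rightarrow> real" where "b2 = (\<lambda>v. if v \<le> 3 then 11/70 else if v \<le> 6 then 0 else if v \<le> 8 then 1/28 else 3/10)"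

lemma init_b: "(\<lambda>_. real 3 / real (card exN)) = b0" unfolding b0_def cardN by simp

lemma mes_step1E:
  assumes "mes_step1 C N A (xs, b) st'"
  obtains c \<rho> where "c \<in> C - set xs" "mes_affordable N A b c" "mes_rho_ok N A b c \<rho>"
    "\<forall>d\<in>C - set xs. \<forall>\<rho>'. mes_affordable N A b d \<longrightarrow> mes_rho_ok N A b d \<rho>' \<longrightarrow> \<rho> \<le> \<rho>'"
    "fst st' = c # xs" "snd st' = (\<lambda>j. if j \<in> supporters N A c then b j - min \<rho> (b j) else b j)"
  using assms unfolding mes_step1_def fst_conv snd_conv by blast

lemma stepA1: "mes_step1 exC exN exA ([], b0) st' \<Longrightarrow> st' = ([0], b1)"
proof -
  assume s: "mes_step1 exC exN exA ([], b0) st'"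
  obtain c \<rho> where c: "c \<in> exC - set []" and aff: "mes_affordable exN exA b0 c" and ok: "mes_rho_ok exN exA b0 c \<rho>"
    and mn: "\<forall>d\<in>exC - set []. \<forall>\<rho>'. mes_affordable exN exA b0 d \<longrightarrow> mes_rho_ok exN exA b0 d \<rho>' \<longrightarrow> \<rho> \<le> \<rho>'"
    and st: "fst st' = [c]" "snd st' = (\<lambda>i. if i \<in> supporters exN exA c then b0 i - min \<rho> (b0 i) else b0 i)"
    by (rule mes_step1E[OF s])
  have a0: "mes_affordable exN exA b0 0" unfolding mes_affordable_def sA0 b0_def by simp
  have o0: "mes_rho_ok exN exA b0 0 (1/7)" unfolding mes_rho_ok_def sA0 b0_def by simp
  have r1: "\<rho> \<le> 1/7" using mn a0 o0 unfolding exC_def by auto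
  have c0: "c = 0"
  proof (rule ccontr)
    assume "c \<noteq> 0"
    then have c6: "card (supporters exN exA c) \<le> 6" using c unfolding exC_def by (auto simp: sAll)
    have fc: "finite (supporters exN exA c)" unfolding supporters_def exN_def by simp
    have "1 / real 6 \<le> \<rho>" by (rule rho_lb[OF ok fc c6]) simp
    then have "1/6 \<le> \<rho>" by simp
    with r1 show False by simp
  qed
  have f0: "finite (supporters exN exA 0)" by (simp add: sA0)
  have c7: "card (supporters exN exA 0) \<le> 7" by (simp add: sA0)
  have "1 / real 7 \<le> \<rho>" by (rule rho_lb[OF ok[unfolded c0] f0 c7]) simp
  then have "1/7 \<le> \<rho>" by simp
  with r1 have r: "\<rho> = 1/7" by simp
  show ?thesis using st c0 r by (cases st') (auto simp: b1_def b0_def sA0 fun_eq_iff)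
qed

lemma stepA2: "mes_step1 exC exN exA ([0], b1) st' \<Longrightarrow> st' = ([2,0], b2)"
proof -
  assume s: "mes_step1 exC exN exA ([0], b1) st'"
  obtain c \<rho> where c: "c \<in> exC - set [0]" and aff: "mes_affordable exN exA b1 c" and ok: "mes_rho_ok exN exA b1 c \<rho>"
    and mn: "\<forall>d\<in>exC - set [0]. \<forall>\<rho>'. mes_affordable exN exA b1 d \<longrightarrow> mes_rho_ok exN exA b1 d \<rho>' \<longrightarrow> \<rho> \<le> \<rho>'"
    and st: "fst st' = [c, 0]" "snd st' = (\<lambda>i. if i \<in> supporters exN exA c then b1 i - min \<rho> (b1 i) else b1 i)"
    by (rule mes_step1E[OF s])
  have a2: "mes_affordable exN exA b1 2" unfolding mes_affordable_def sA2 b1_def by simp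
  have o2: "mes_rho_ok exN exA b1 2 (37/140)" unfolding mes_rho_ok_def sA2 b1_def by simp
  have r1: "\<rho> \<le> 37/140" using mn a2 o2 unfolding exC_def by auto
  have n1: "\<not> mes_affordable exN exA b1 1" unfolding mes_affordable_def sA1 b1_def by simp
  have n3: "\<not> mes_rho_ok exN exA b1 3 \<rho>"
  proof
    assume "mes_rho_ok exN exA b1 3 \<rho>"
    then have "min \<rho> (11/70) + (min \<rho> (3/10) + (min \<rho> (3/10) + min \<rho> (3/10))) = 1"
      unfolding mes_rho_ok_def sA3 b1_def by simp
    with r1 show False by (simp add: min_def split: if_splits)
  qed
  have c2: "c = 2" using c aff ok n1 n3 unfolding exC_def by auto
  have "3 * min \<rho> (11/70) + 2 * min \<rho> (3/10) = 1" using ok unfolding c2 mes_rho_ok_def sA2 b1_def by simp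
  with r1 have r: "\<rho> = 37/140" by (simp add: min_def split: if_splits)
  show ?thesis using st c2 r by (cases st') (auto simp: b1_def b2_def sA2 fun_eq_iff)
qed

lemma stepA3: "\<not> mes_step1 exC exN exA ([2,0], b2) st'"
  unfolding mes_step1_def mes_affordable_def exC_def by (auto simp: sAll b2_def)

lemma doneA2: "mes_phase1_done exC exN exA ([2,0], b2)"
  unfolding mes_phase1_done_def mes_affordable_def exC_def by (auto simp: sAll b2_def)
lemma ndoneA0: "\<not> mes_phase1_done exC exN exA ([], b0)"
  unfolding mes_phase1_done_def mes_affordable_def exC_def by (auto simp: sA0 b0_def)
lemma ndoneA1: "\<not> mes_phase1_done exC exN exA ([0], b1)"
  unfolding mes_phase1_done_def mes_affordable_def exC_def by (auto simp: sA2 b1_def)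

lemma phase1A: "(mes_step1 exC exN exA)\<^sup>*\<^sup>* ([], b0) st \<Longrightarrow> mes_phase1_done exC exN exA st \<Longrightarrow> st = ([2,0], b2)"
proof -
  assume r: "(mes_step1 exC exN exA)\<^sup>*\<^sup>* ([], b0) st" and d: "mes_phase1_done exC exN exA st"
  from r show ?thesis
  proof (cases rule: converse_rtranclpE)
    case base then show ?thesis using d ndoneA0 by simp
  next
    case (step y)
    then have y: "y = ([0], b1)" using stepA1 by blast
    from step(2)[unfolded y] show ?thesis
    proof (cases rule: converse_rtranclpE)
      case base then show ?thesis using d ndoneA1 by simp
    next
      case (step y')
      then have y': "y' = ([2,0], b2)" using stepA2 by blast
      from step(2)[unfolded y'] show ?thesis
      proof (cases rule: converse_rtranclpE)
        case base then show ?thesis by simp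
      next
        case (step y'') then show ?thesis using stepA3 by blast
      qed
    qed
  qed
qed

lemma phr_len: "(phragmen_step C N A)\<^sup>*\<^sup>* st st' \<Longrightarrow> st' = st \<or> length (fst st) < length (fst st')"
proof (induction rule: rtranclp_induct)
  case base then show ?case by simp
next
  case (step y z)
  then have "length (fst z) = Suc (length (fst y))" unfolding phragmen_step_def by auto
  with step.IH show ?case by auto
qed

lemma phA: "phragmen_step exC exN exA ([2,0], b2) y \<Longrightarrow> fst y = [1,2,0]"
proof -
  assume "phragmen_step exC exN exA ([2,0], b2) y"
  then obtain c where c: "c \<in> exC - {2,0}" "fst y = [c,2,0]"
    and br: "(supporters exN exA c \<noteq> {} \<and>
          (\<forall>d\<in>exC - {2,0}. supporters exN exA d \<noteq> {} \<longrightarrow> phrag_time exN exA b2 c \<le> phrag_time exN exA b2 d))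
        \<or> (\<forall>d\<in>exC - {2,0}. supporters exN exA d = {})"
    unfolding phragmen_step_def by auto
  have t1: "phrag_time exN exA b2 1 = 37/420" unfolding phrag_time_def sA1 b2_def by simp
  have t3: "phrag_time exN exA b2 3 = 33/280" unfolding phrag_time_def sA3 b2_def by simp
  have "c = 1"
  proof (rule ccontr)
    assume "c \<noteq> 1"
    then have c3: "c = 3" using c unfolding exC_def by auto
    from br show False
    proof
      assume h: "supporters exN exA c \<noteq> {} \<and>
          (\<forall>d\<in>exC - {2,0}. supporters exN exA d \<noteq> {} \<longrightarrow> phrag_time exN exA b2 c \<le> phrag_time exN exA b2 d)"
      have "phrag_time exN exA b2 3 \<le> phrag_time exN exA b2 1" using h c3 unfolding exC_def by (auto simp: sAll)
      then show False using t1 t3 by simp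
    next
      assume "\<forall>d\<in>exC - {2,0}. supporters exN exA d = {}"
      from this[rule_format, of 1] show False unfolding exC_def by (simp add: sAll)
    qed
  qed
  then show ?thesis using c by simp
qed

lemma resA: "W \<in> equal_shares exC exN exA 3 \<Longrightarrow> W = {0,1,2}"
proof -
  assume "W \<in> equal_shares exC exN exA 3"
  then obtain xs st b where W: "W = set xs" and r1: "(mes_step1 exC exN exA)\<^sup>*\<^sup>* ([], b0) st"
    and d: "mes_phase1_done exC exN exA st" and r2: "(phragmen_step exC exN exA)\<^sup>*\<^sup>* st (xs, b)" and l: "length xs = 3"
    unfolding equal_shares_def init_b by blast
  have st: "st = ([2,0], b2)" using phase1A[OF r1 d] .
  from r2[unfolded st] show ?thesis
  proof (cases rule: converse_rtranclpE)
    case base then have "xs = [2,0]" by simp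
    then show ?thesis using l by simp
  next
    case (step y)
    have fy: "fst y = [1,2,0]" using phA[OF step(1)] .
    from phr_len[OF step(2)] have "(xs, b) = y" using fy l by auto
    then show ?thesis using W fy by auto
  qed
qed

lemma mes_step1I:
  assumes "c \<in> C - set xs" "mes_affordable N A b c" "mes_rho_ok N A b c \<rho>"
    "\<And>d \<rho>'. d \<in> C - set xs \<Longrightarrow> mes_affordable N A b d \<Longrightarrow> mes_rho_ok N A b d \<rho>' \<Longrightarrow> \<rho> \<le> \<rho>'"
    "b' = (\<lambda>i. if i \<in> supporters N A c then b i - min \<rho> (b i) else b i)"
  shows "mes_step1 C N A (xs, b) (c # xs, b')"
  unfolding mes_step1_def fst_conv snd_conv
  apply (rule exI[of _ c], rule exI[of _ \<rho>]) using assms by auto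

lemma phragmen_stepI:
  assumes "c \<in> C - set xs" "supporters N A c \<noteq> {}"
    "\<And>d. d \<in> C - set xs \<Longrightarrow> supporters N A d \<noteq> {} \<Longrightarrow> phrag_time N A b c \<le> phrag_time N A b d"
  shows "phragmen_step C N A (xs, b) (c # xs, (\<lambda>i. if i \<in> supporters N A c then 0 else b i + phrag_time N A b c))"
  unfolding phragmen_step_def fst_conv snd_conv
  apply (rule exI[of _ c]) using assms by auto

lemma memA: "{0,1,2} \<in> equal_shares exC exN exA 3"
proof -
  have s1: "mes_step1 exC exN exA ([], b0) ([0], b1)"
  proof (rule mes_step1I[where \<rho> = "1/7"])
    show "0 \<in> exC - set []" unfolding exC_def by simp
    show "mes_affordable exN exA b0 0" unfolding mes_affordable_def sA0 b0_def by simp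
    show "mes_rho_ok exN exA b0 0 (1/7)" unfolding mes_rho_ok_def sA0 b0_def by simp
    show "b1 = (\<lambda>i. if i \<in> supporters exN exA 0 then b0 i - min (1/7) (b0 i) else b0 i)"
      by (auto simp: sA0 b0_def b1_def fun_eq_iff)
    fix d \<rho>' assume d: "d \<in> exC - set []" and o: "mes_rho_ok exN exA b0 d \<rho>'"
    have c7: "card (supporters exN exA d) \<le> 7" using d unfolding exC_def by (auto simp: sAll)
    have fd: "finite (supporters exN exA d)" unfolding supporters_def exN_def by simp
    have "1 / real 7 \<le> \<rho>'" by (rule rho_lb[OF o fd c7]) simp
    then show "1/7 \<le> \<rho>'" by simp
  qed
  have s2: "mes_step1 exC exN exA ([0], b1) ([2,0], b2)"
  proof (rule mes_step1I[where \<rho> = "37/140"])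
    show "2 \<in> exC - set [0]" unfolding exC_def by simp
    show "mes_affordable exN exA b1 2" unfolding mes_affordable_def sA2 b1_def by simp
    show "mes_rho_ok exN exA b1 2 (37/140)" unfolding mes_rho_ok_def sA2 b1_def by simp
    show "b2 = (\<lambda>i. if i \<in> supporters exN exA 2 then b1 i - min (37/140) (b1 i) else b1 i)"
      by (auto simp: sA2 b1_def b2_def fun_eq_iff)
    fix d \<rho>' assume d: "d \<in> exC - set [0]" and a: "mes_affordable exN exA b1 d"
      and o: "mes_rho_ok exN exA b1 d \<rho>'"
    have "d = 2 \<or> d = 3" using d a unfolding exC_def mes_affordable_def by (auto simp: sAll b1_def)
    then show "37/140 \<le> \<rho>'"
    proof
      assume d2: "d = 2"
      have "3 * min \<rho>' (11/70) + 2 * min \<rho>' (3/10) = 1" using o unfolding d2 mes_rho_ok_def sA2 b1_def by simp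
      then show ?thesis by (simp add: min_def split: if_splits)
    next
      assume d3: "d = 3"
      have "min \<rho>' (11/70) + (min \<rho>' (3/10) + (min \<rho>' (3/10) + min \<rho>' (3/10))) = 1"
        using o unfolding d3 mes_rho_ok_def sA3 b1_def by simp
      then show ?thesis by (simp add: min_def split: if_splits)
    qed
  qed
  have t1: "phrag_time exN exA b2 1 = 37/420" unfolding phrag_time_def sA1 b2_def by simp
  have t3: "phrag_time exN exA b2 3 = 33/280" unfolding phrag_time_def sA3 b2_def by simp
  have p: "phragmen_step exC exN exA ([2,0], b2) ([1,2,0], (\<lambda>i. if i \<in> supporters exN exA 1 then 0 else b2 i + phrag_time exN exA b2 1))"
  proof (rule phragmen_stepI)
    show "1 \<in> exC - set [2,0]" unfolding exC_def by simp
    show "supporters exN exA 1 \<noteq> {}" by (simp add: sAll)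
    fix d assume "d \<in> exC - set [2,0]"
    then have "d = 1 \<or> d = 3" unfolding exC_def by auto
    then show "phrag_time exN exA b2 1 \<le> phrag_time exN exA b2 d" using t1 t3 by auto
  qed
  have "set [1,2,0::nat] = {0,1,2}" by auto
  then show ?thesis unfolding equal_shares_def init_b
    using s1 s2 doneA2 p
    by (smt (verit) converse_rtranclp_into_rtranclp length_Cons list.size(3) mem_Collect_eq numeral_3_eq_3 r_into_rtranclp rtranclp.rtrancl_refl)
qed


definition c0 :: "nat \<Rightarrow> real" where "c0 = (\<lambda>_. 1/3)"
definition c1 :: "nat \<Rightarrow> real" where "c1 = (\<lambda>v. if v \<le> 6 then 4/21 else 1/3)"
definition c2 :: "nat \<Rightarrow> real" where "c2 = (\<lambda>v. if v = 0 then 4/21 else if v \<le> 6 then 1/42 else 1/3)"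

lemma init_c: "(\<lambda>_. real 3 / real (card (exN - {9}))) = c0" unfolding c0_def cardN' by simp

lemma finB: "finite (supporters (exN - {9}) exA d)" unfolding supporters_def exN_def by simp

lemma memB: "{0,1,3} \<in> equal_shares exC (exN - {9}) exA 3"
proof -
  have s1: "mes_step1 exC (exN - {9}) exA ([], c0) ([0], c1)"
  proof (rule mes_step1I[where \<rho> = "1/7"])
    show "0 \<in> exC - set []" unfolding exC_def by simp
    show "mes_affordable (exN - {9}) exA c0 0" unfolding mes_affordable_def sB0 c0_def by simp
    show "mes_rho_ok (exN - {9}) exA c0 0 (1/7)" unfolding mes_rho_ok_def sB0 c0_def by simp
    show "c1 = (\<lambda>i. if i \<in> supporters (exN - {9}) exA 0 then c0 i - min (1/7) (c0 i) else c0 i)"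
      by (auto simp: sB0 c0_def c1_def fun_eq_iff)
    fix d \<rho>' assume d: "d \<in> exC - set []" and o: "mes_rho_ok (exN - {9}) exA c0 d \<rho>'"
    have "card (supporters (exN - {9}) exA d) \<le> 7" using d unfolding exC_def by (auto simp: sBll)
    then have "1 / real 7 \<le> \<rho>'" by (rule rho_lb[OF o finB]) simp
    then show "1/7 \<le> \<rho>'" by simp
  qed
  have s2: "mes_step1 exC (exN - {9}) exA ([0], c1) ([1,0], c2)"
  proof (rule mes_step1I[where \<rho> = "1/6"])
    show "1 \<in> exC - set [0]" unfolding exC_def by simp
    show "mes_affordable (exN - {9}) exA c1 1" unfolding mes_affordable_def sB1 c1_def by simp
    show "mes_rho_ok (exN - {9}) exA c1 1 (1/6)" unfolding mes_rho_ok_def sB1 c1_def by simp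
    show "c2 = (\<lambda>i. if i \<in> supporters (exN - {9}) exA 1 then c1 i - min (1/6) (c1 i) else c1 i)"
      by (auto simp: sBll c1_def c2_def fun_eq_iff)
    fix d \<rho>' assume d: "d \<in> exC - set [0]" and o: "mes_rho_ok (exN - {9}) exA c1 d \<rho>'"
    have "card (supporters (exN - {9}) exA d) \<le> 6" using d unfolding exC_def by (auto simp: sBll)
    then have "1 / real 6 \<le> \<rho>'" by (rule rho_lb[OF o finB]) simp
    then show "1/6 \<le> \<rho>'" by simp
  qed
  have dn: "mes_phase1_done exC (exN - {9}) exA ([1,0], c2)"
    unfolding mes_phase1_done_def mes_affordable_def exC_def by (auto simp: sBll c2_def)
  have t2: "phrag_time (exN - {9}) exA c2 2 = 11/210" unfolding phrag_time_def sB2 c2_def by simp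
  have t3: "phrag_time (exN - {9}) exA c2 3 = 1/21" unfolding phrag_time_def sB3 c2_def by simp
  have p: "phragmen_step exC (exN - {9}) exA ([1,0], c2) ([3,1,0], (\<lambda>i. if i \<in> supporters (exN - {9}) exA 3 then 0 else c2 i + phrag_time (exN - {9}) exA c2 3))"
  proof (rule phragmen_stepI)
    show "3 \<in> exC - set [1,0]" unfolding exC_def by simp
    show "supporters (exN - {9}) exA 3 \<noteq> {}" by (simp add: sB3)
    fix d assume "d \<in> exC - set [1,0]"
    then have "d = 2 \<or> d = 3" unfolding exC_def by auto
    then show "phrag_time (exN - {9}) exA c2 3 \<le> phrag_time (exN - {9}) exA c2 d" using t2 t3 by auto
  qed
  have "set [3,1,0::nat] = {0,1,3}" by auto
  then show ?thesis unfolding equal_shares_def init_c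
    using s1 s2 dn p
    by (smt (verit) converse_rtranclp_into_rtranclp length_Cons list.size(3) mem_Collect_eq numeral_3_eq_3 r_into_rtranclp rtranclp.rtrancl_refl)
qed

lemma part3: "\<exists>(C::nat set) (N::nat set) A k i.
            finite C \<and> 1 < card C \<and> valid_profile C N A \<and> 2 \<le> card N \<and> 1 \<le> k \<and> k < card C \<and> i \<in> N \<and>
            (\<forall>W\<in>equal_shares C N A k. W \<inter> A i = {}) \<and>
            kelly_strict (A i) (equal_shares C (N - {i}) A k) (equal_shares C N A k)"
  apply (rule exI[of _ exC], rule exI[of _ exN], rule exI[of _ exA], rule exI[of _ 3], rule exI[of _ 9])
proof (intro conjI)
  show "finite exC" unfolding exC_def by simp
  show "1 < card exC" unfolding exC_def by simp
  show "3 < card exC" unfolding exC_def by simp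
  show "valid_profile exC exN exA" unfolding valid_profile_def exC_def exN_def exA_def by auto
  show "2 \<le> card exN" using cardN by simp
  show "(1::nat) \<le> 3" by simp
  show "9 \<in> exN" unfolding exN_def by simp
  have A9: "exA 9 = {3}" unfolding exA_def by simp
  show "\<forall>W\<in>equal_shares exC exN exA 3. W \<inter> exA 9 = {}"
  proof
    fix W assume "W \<in> equal_shares exC exN exA 3"
    then have "W = {0,1,2}" by (rule resA)
    then show "W \<inter> exA 9 = {}" using A9 by simp
  qed
  show "kelly_strict (exA 9) (equal_shares exC (exN - {9}) exA 3) (equal_shares exC exN exA 3)"
    unfolding kelly_strict_def
  proof (intro conjI ballI)
    fix W W' assume "W' \<in> equal_shares exC exN exA 3"
    then have "W' = {0,1,2}" using resA by blast
    then show "card (W' \<inter> exA 9) \<le> card (W \<inter> exA 9)" using A9 by simp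
  next
    show "\<exists>W\<in>equal_shares exC (exN - {9}) exA 3. \<exists>W'\<in>equal_shares exC exN exA 3. card (W' \<inter> exA 9) < card (W \<inter> exA 9)"
      using memA memB A9 by (intro bexI[OF _ memB] bexI[OF _ memA]) simp
  qed
qed

theorem proposition1:
  shows "(\<forall>(s::nat \<Rightarrow> rat) (C::'a set). thiele_function s \<longrightarrow> finite C \<longrightarrow> 1 < card C \<longrightarrow>
            participation_unrepresented C (seq_thiele s :: ('a, 'v) abc_rule)) \<and>
         (\<forall>C::'a set. finite C \<longrightarrow> 1 < card C \<longrightarrow>
            participation_unrepresented C (seq_phragmen :: ('a, 'v) abc_rule)) \<and>
         (\<exists>(C::nat set) (N::nat set) A k i.
            finite C \<and> 1 < card C \<and> valid_profile C N A \<and> 2 \<le> card N \<and> 1 \<le> k \<and> k < card C \<and> i \<in> N \<and>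
            (\<forall>W\<in>equal_shares C N A k. W \<inter> A i = {}) \<and>
            kelly_strict (A i) (equal_shares C (N - {i}) A k) (equal_shares C N A k))"
  using thiele_part phragmen_part part3 by blast

end
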